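(* Let $0<p<1$ and let $\mathcal O(D_p)$ be the universal complex $*$-algebra generated by one element $x$ subject to $x^*x-pxx^*=1-p$. Put $X:=1-xx^*$, and for $n\in\mathbb N$ write $x^{-n}:=(x^* )^n$. Then for all $\mu,\nu\in\mathbb Z$, $$x^\mu x^\nu=(1+\mathcal Q^p_{\mu;\nu}(X))\,x^{\mu+\nu}.$$
   Context: For real $r>0$ and $n\ge1$, $Q^r_n(Y)=\sum_{m=1}^n(-1)^m r^{-nm+\frac{m(m+1)}{2}}\binom{n}{m}_{r}Y^m$, where $[0]_r=0$, $[n]_r=1+r+\dots+r^{n-1}$, $[n]_r!=[1]_r\cdots[n]_r$, $[0]_r!=1$, $\binom{n}{m}_r=\frac{[n]_r!}{[m]_r![n-m]_r!}$. For $\mu\in\mathbb Z$: $\mathcal Q^p_\mu=Q^p_\mu$ if $\mu>0$, $\mathcal Q^p_0=0$, $\mathcal Q^p_\mu(Y)=Q^{p^{-1}}_{-\mu}(pY)$ if $\mu<0$. For $\mu,\nu\in\mathbb Z$: $\mathcal Q^p_{\mu;\nu}=0$ if $\mu\nu\ge0$; $\mathcal Q^p_{\mu;\nu}(Y)=\mathcal Q^p_\mu(Y)$ if $\mu\nu<0$ and $|\mu|\le|\nu|$; $\mathcal Q^p_{\mu;\nu}(Y)=\mathcal Q^p_{-\nu}(p^{-(\mu+\nu)}Y)$ if $\mu\nu<0$ and $|\mu|>|\nu|$. *)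

theory Defs
  imports Complex_Main
begin

definition cstar_alg :: "(complex \<Rightarrow> 'a::ring_1 \<Rightarrow> 'a) \<Rightarrow> ('a \<Rightarrow> 'a) \<Rightarrow> bool" where
  "cstar_alg sm st \<longleftrightarrow>
     (\<forall>a b u v. sm a (u + v) = sm a u + sm a v
        \<and> sm (a + b) u = sm a u + sm b u
        \<and> sm a (sm b u) = sm (a * b) u
        \<and> sm 1 u = u
        \<and> sm a (u * v) = sm a u * v
        \<and> sm a (u * v) = u * sm a v
        \<and> st (u + v) = st u + st v
        \<and> st (sm a u) = sm (cnj a) (st u)
        \<and> st (u * v) = st v * st u
        \<and> st (st u) = u)"

definition qint :: "real \<Rightarrow> nat \<Rightarrow> real" where
  "qint r n = (\<Sum>i<n. r ^ i)"

definition qfact :: "real \<Rightarrow> nat \<Rightarrow> real" where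
  "qfact r n = (\<Prod>i=1..n. qint r i)"

definition qbinom :: "real \<Rightarrow> nat \<Rightarrow> nat \<Rightarrow> real" where
  "qbinom r n m = qfact r n / (qfact r m * qfact r (n - m))"

definition Qpol :: "(complex \<Rightarrow> 'a::ring_1 \<Rightarrow> 'a) \<Rightarrow> real \<Rightarrow> nat \<Rightarrow> 'a \<Rightarrow> 'a" where
  "Qpol sm r n Y = (\<Sum>m=1..n. sm (complex_of_real
      ((-1) ^ m * r powi (int (m * (m + 1) div 2) - int n * int m) * qbinom r n m)) (Y ^ m))"

definition calQ :: "(complex \<Rightarrow> 'a::ring_1 \<Rightarrow> 'a) \<Rightarrow> real \<Rightarrow> int \<Rightarrow> 'a \<Rightarrow> 'a" where
  "calQ sm p \<mu> Y =
     (if \<mu> > 0 then Qpol sm p (nat \<mu>) Y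
      else if \<mu> = 0 then 0
      else Qpol sm (inverse p) (nat (- \<mu>)) (sm (complex_of_real p) Y))"

definition calQ2 :: "(complex \<Rightarrow> 'a::ring_1 \<Rightarrow> 'a) \<Rightarrow> real \<Rightarrow> int \<Rightarrow> int \<Rightarrow> 'a \<Rightarrow> 'a" where
  "calQ2 sm p \<mu> \<nu> Y =
     (if \<mu> * \<nu> \<ge> 0 then 0
      else if \<bar>\<mu>\<bar> \<le> \<bar>\<nu>\<bar> then calQ sm p \<mu> Y
      else calQ sm p (- \<nu>) (sm (complex_of_real (p powi (- (\<mu> + \<nu>)))) Y))"

definition xpow :: "('a::ring_1 \<Rightarrow> 'a) \<Rightarrow> 'a \<Rightarrow> int \<Rightarrow> 'a" where
  "xpow st x \<mu> = (if \<mu> \<ge> 0 then x ^ nat \<mu> else (st x) ^ nat (- \<mu>))"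

end

theory Submission imports Defs begin
lemma qint_pos: "r > 0 \<Longrightarrow> i \<ge> 1 \<Longrightarrow> qint r i > 0"
  unfolding qint_def by (intro sum_pos) (auto simp: lessThan_empty_iff)

lemma qfact_pos: "r > 0 \<Longrightarrow> qfact r n > 0"
  unfolding qfact_def by (intro prod_pos) (auto intro: qint_pos)

lemma qfact_Suc: "qfact r (Suc n) = qfact r n * qint r (Suc n)"
  unfolding qfact_def by simp

lemma qfact_0: "qfact r 0 = 1" unfolding qfact_def by simp

lemma qint_add: "qint r (k + m) = qint r k + r ^ k * qint r m"
  by (induction m) (simp_all add: qint_def algebra_simps power_add)

lemma qbinom_0: "r > 0 \<Longrightarrow> qbinom r n 0 = 1"
  using qfact_pos[of r n] by (simp add: qbinom_def qfact_0)

lemma qbinom_nn: "r > 0 \<Longrightarrow> qbinom r n n = 1"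
  using qfact_pos[of r n] by (simp add: qbinom_def qfact_0)

lemma qpascal:
  assumes r: "r > 0" and j: "j \<le> n"
  shows "qbinom r (Suc n) (Suc j) = r ^ Suc j * (if Suc j \<le> n then qbinom r n (Suc j) else 0) + qbinom r n j"
proof (cases "j = n")
  case True thus ?thesis using qbinom_nn[OF r] by simp
next
  case False
  then obtain m where n: "n = Suc j + m" using j by (metis le_Suc_ex le_neq_implies_less Suc_le_eq)
  have qi: "qint r (Suc n) = qint r (Suc j) + r ^ Suc j * qint r (Suc m)"
    using qint_add[of r "Suc j" "Suc m"] n by simp
  have p1: "qfact r j > 0" "qfact r m > 0" "qfact r n > 0" using qfact_pos[OF r] by auto
  have p2: "qint r (Suc j) > 0" "qint r (Suc m) > 0" using qint_pos[OF r] by auto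
  have e1: "Suc n - Suc j = Suc m" "n - Suc j = m" "n - j = Suc m" using n by auto
  show ?thesis using p1 p2 n
    unfolding qbinom_def e1 qfact_Suc qi
    by (simp add: field_simps)
qed

definition cf :: "real \<Rightarrow> nat \<Rightarrow> nat \<Rightarrow> real" where
  "cf r n k = (if k \<le> n then (-1)^k * r powi (int (k*(k+1) div 2) - int n * int k) * qbinom r n k else 0)"

lemma tri: "int (Suc j * (Suc j + 1) div 2) = int (j * (j + 1) div 2) + int j + 1"
proof -
  have "Suc j * (Suc j + 1) = j * (j+1) + 2 * (j + 1)" by simp
  hence "Suc j * (Suc j + 1) div 2 = j * (j+1) div 2 + (j + 1)" by simp
  thus ?thesis by simp
qed

lemma cf_rec:
  assumes r: "r > 0"
  shows "cf r (Suc n) k = cf r n k - (if k = 0 then 0 else inverse r ^ n * cf r n (k - 1))"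
proof (cases k)
  case 0 thus ?thesis using qbinom_0[OF r] by (simp add: cf_def)
next
  case (Suc j)
  show ?thesis
  proof (cases "j \<le> n")
    case False thus ?thesis using Suc by (simp add: cf_def)
  next
    case True
    define E where "E = r powi (int (Suc j * (Suc j + 1) div 2) - int (Suc n) * int (Suc j))"
    have e1: "r powi (int (Suc j * (Suc j + 1) div 2) - int n * int (Suc j)) = E * r ^ Suc j"
    proof -
      have "int (Suc j * (Suc j + 1) div 2) - int n * int (Suc j)
          = (int (Suc j * (Suc j + 1) div 2) - int (Suc n) * int (Suc j)) + int (Suc j)"
        by (simp add: algebra_simps)
      hence "r powi (int (Suc j * (Suc j + 1) div 2) - int n * int (Suc j))
          = r powi (int (Suc j * (Suc j + 1) div 2) - int (Suc n) * int (Suc j)) * r powi int (Suc j)"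
        using r by (metis power_int_add less_irrefl)
      thus ?thesis unfolding E_def by (simp only: power_int_of_nat)
    qed
    have e2: "inverse r ^ n * r powi (int (j * (j + 1) div 2) - int n * int j) = E"
    proof -
      have "int (j * (j + 1) div 2) - int n * int j
          = (int (Suc j * (Suc j + 1) div 2) - int (Suc n) * int (Suc j)) + int n"
        unfolding tri by (simp add: algebra_simps)
      hence "r powi (int (j * (j + 1) div 2) - int n * int j)
          = E * r powi int n"
        using r unfolding E_def by (metis power_int_add less_irrefl)
      thus ?thesis using r by (simp add: power_int_of_nat power_inverse field_simps)
    qed
    have pa: "qbinom r (Suc n) (Suc j) = r ^ Suc j * (if Suc j \<le> n then qbinom r n (Suc j) else 0) + qbinom r n j"
      by (rule qpascal[OF r True])
    show ?thesis
    proof (cases "Suc j \<le> n")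
      case T: True
      have "cf r (Suc n) k = (-1)^Suc j * E * qbinom r (Suc n) (Suc j)"
        using Suc True by (simp add: cf_def E_def)
      moreover have "cf r n k = (-1)^Suc j * (E * r ^ Suc j) * qbinom r n (Suc j)"
        using Suc T e1 by (simp add: cf_def)
      moreover have "inverse r ^ n * cf r n (k - 1) = (-1)^j * E * qbinom r n j"
        using Suc True e2[symmetric] by (simp add: cf_def)
      ultimately show ?thesis using Suc pa T by (simp add: algebra_simps)
    next
      case F: False
      have "cf r (Suc n) k = (-1)^Suc j * E * qbinom r (Suc n) (Suc j)"
        using Suc True by (simp add: cf_def E_def)
      moreover have "cf r n k = 0"
        using Suc F by (simp add: cf_def)
      moreover have "inverse r ^ n * cf r n (k - 1) = (-1)^j * E * qbinom r n j"
        using Suc True e2[symmetric] by (simp add: cf_def)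
      ultimately show ?thesis using Suc pa F by (simp add: algebra_simps)
    qed
  qed
qed

locale qd =
  fixes sm :: "complex \<Rightarrow> 'a::ring_1 \<Rightarrow> 'a" and st :: "'a \<Rightarrow> 'a"
    and x :: 'a and p :: real
  assumes cs: "cstar_alg sm st"
    and p0: "0 < p" and p1: "p < 1"
    and rel: "st x * x - sm (complex_of_real p) (x * st x) = sm (complex_of_real (1 - p)) 1"
begin

lemma ax: "sm a (u + v) = sm a u + sm a v
        \<and> sm (a + b) u = sm a u + sm b u
        \<and> sm a (sm b u) = sm (a * b) u
        \<and> sm 1 u = u
        \<and> sm a (u * v) = sm a u * v
        \<and> sm a (u * v) = u * sm a v"
  using cs unfolding cstar_alg_def by (elim allE conjE) (intro conjI)
lemma sm_addR: "sm a (u + v) = sm a u + sm a v" using ax by blast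
lemma sm_addL: "sm (a + b) u = sm a u + sm b u" using ax by blast
lemma sm_sm: "sm a (sm b u) = sm (a * b) u" using ax by blast
lemma sm_one: "sm 1 u = u" using ax by blast
lemma sm_multL: "sm a u * v = sm a (u * v)" using ax[of a u v a] by (elim conjE) (rule sym)
lemma sm_multR: "u * sm a v = sm a (u * v)" using ax[of a u v a] by (elim conjE) (rule sym)
lemma sm_zeroL: "sm 0 u = 0"
proof - have "sm (0+0) u = sm 0 u + sm 0 u" by (rule sm_addL)
  hence "sm 0 u + sm 0 u = sm 0 u" by (metis add_0)
  thus ?thesis by (metis add_cancel_left_right) qed
lemma sm_zeroR: "sm a 0 = 0"
proof - have "sm a (0+0) = sm a 0 + sm a 0" by (rule sm_addR)
  hence "sm a 0 + sm a 0 = sm a 0" by (metis add_0)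
  thus ?thesis by (metis add_cancel_left_right) qed
lemma sm_minusR: "sm a (- u) = - sm a u"
proof - have "sm a u + sm a (-u) = 0" by (metis sm_addR sm_zeroR right_minus)
  thus ?thesis by (metis add.commute neg_eq_iff_add_eq_0) qed
lemma sm_minusL: "sm (- a) u = - sm a u"
proof - have "sm a u + sm (-a) u = 0" by (metis sm_addL sm_zeroL right_minus)
  thus ?thesis by (metis add.commute neg_eq_iff_add_eq_0) qed
lemma sm_diffR: "sm a (u - v) = sm a u - sm a v"
  using sm_addR[of a u "-v"] sm_minusR by simp
lemma sm_diffL: "sm (a - b) u = sm a u - sm b u"
  using sm_addL[of a "-b" u] sm_minusL by simp
lemma sm_sumR: "sm a (sum f A) = (\<Sum>i\<in>A. sm a (f i))"
  by (induction A rule: infinite_finite_induct) (simp_all add: sm_zeroR sm_addR)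

lemma Qpol_cf:
  assumes r: "r > 0"
  shows "1 + Qpol sm r n Y = (\<Sum>k\<le>n. sm (of_real (cf r n k)) (Y^k))"
proof -
  have s: "{..n} = insert 0 {1..n}" by auto
  have "(\<Sum>k\<le>n. sm (of_real (cf r n k)) (Y^k)) = sm (of_real (cf r n 0)) 1 + (\<Sum>k=1..n. sm (of_real (cf r n k)) (Y^k))"
    unfolding s by (subst sum.insert) auto
  also have "sm (of_real (cf r n 0)) 1 = 1" using qbinom_0[OF r] by (simp add: cf_def sm_one)
  also have "(\<Sum>k=1..n. sm (of_real (cf r n k)) (Y^k)) = Qpol sm r n Y"
    unfolding Qpol_def by (rule sum.cong) (auto simp: cf_def)
  finally show ?thesis by simp
qed

lemma QR:
  assumes r: "r > 0" and P0: "P 0 = 1"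
    and PS: "\<And>m. P (Suc m) = P m - sm (of_real (inverse r ^ m)) (Y * P m)"
  shows "P n = 1 + Qpol sm r n Y"
proof -
  define S where "S n = (\<Sum>k\<le>n. sm (of_real (cf r n k)) (Y^k))" for n
  have "P n = S n"
  proof (induction n)
    case 0 thus ?case using P0 qbinom_0[OF r] by (simp add: S_def cf_def sm_one)
  next
    case (Suc n)
    define g where "g k = (if k = 0 then 0 else inverse r ^ n * cf r n (k - 1))" for k
    have "S (Suc n) = (\<Sum>k\<le>Suc n. sm (of_real (cf r n k) - of_real (g k)) (Y^k))"
      unfolding S_def cf_rec[OF r] g_def by simp
    also have "\<dots> = (\<Sum>k\<le>Suc n. sm (of_real (cf r n k)) (Y^k)) - (\<Sum>k\<le>Suc n. sm (of_real (g k)) (Y^k))"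
      by (simp add: sm_diffL sum_subtractf)
    also have "(\<Sum>k\<le>Suc n. sm (of_real (cf r n k)) (Y^k)) = S n"
      by (simp add: S_def cf_def sm_zeroL)
    also have "(\<Sum>k\<le>Suc n. sm (of_real (g k)) (Y^k)) = (\<Sum>k\<le>n. sm (of_real (g (Suc k))) (Y^Suc k))"
      by (subst sum.atMost_Suc_shift) (simp add: g_def sm_zeroL)
    also have "\<dots> = sm (of_real (inverse r ^ n)) (Y * S n)"
      unfolding S_def sum_distrib_left sm_sumR
      by (rule sum.cong) (simp_all add: g_def sm_multR sm_sm)
    finally show ?case using Suc PS by simp
  qed
  thus ?thesis unfolding S_def using Qpol_cf[OF r] by simp
qed

lemma comm_pow: "(z::'a) * Y = Y' * z \<Longrightarrow> z * Y^m = Y'^m * z"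
proof (induction m)
  case (Suc m)
  assume h: "z * Y = Y' * z"
  have "z * Y^Suc m = (z * Y) * Y^m" by (simp only: power_Suc mult.assoc)
  also have "\<dots> = Y' * (z * Y^m)" using h by (simp add: mult.assoc)
  also have "\<dots> = Y'^Suc m * z" using Suc h by (simp add: mult.assoc)
  finally show ?case .
qed simp

lemma comm_Q: assumes "(z::'a) * Y = Y' * z" shows "z * Qpol sm r n Y = Qpol sm r n Y' * z"
  unfolding Qpol_def sum_distrib_left sum_distrib_right
  by (rule sum.cong) (simp_all add: sm_multR sm_multL comm_pow[OF assms])

definition "XX = 1 - x * st x"

lemma yx: "st x * x = 1 - sm (of_real p) XX"
proof -
  have "st x * x = sm (of_real p) (x * st x) + sm (of_real (1 - p)) 1" using rel by (simp add: algebra_simps)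
  also have "sm (of_real p) (x * st x) = sm (of_real p) 1 - sm (of_real p) XX"
    unfolding XX_def by (simp add: sm_diffR)
  also have "sm (of_real (1 - p)) 1 = 1 - sm (of_real p) 1" by (simp add: sm_diffL sm_one)
  finally show ?thesis by simp
qed

lemma Xx: "XX * x = sm (of_real p) (x * XX)"
proof -
  have "XX * x = x - x * (st x * x)" unfolding XX_def by (simp add: algebra_simps)
  also have "\<dots> = x * sm (of_real p) XX" unfolding yx by (simp add: algebra_simps)
  finally show ?thesis by (simp add: sm_multR)
qed

lemma xX: "x * XX = sm (of_real (inverse p)) (XX * x)"
  unfolding Xx sm_sm using p0 by (simp add: sm_one)

lemma yX: "st x * XX = sm (of_real p) (XX * st x)"
proof -
  have "st x * XX = st x - (st x * x) * st x" unfolding XX_def by (simp add: algebra_simps)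
  also have "\<dots> = sm (of_real p) XX * st x" unfolding yx by (simp add: algebra_simps)
  finally show ?thesis by (simp add: sm_multL)
qed

lemma xk_sm: "x^k * sm (of_real a) XX = sm (of_real (a * inverse p ^ k)) XX * x^k"
proof (induction k)
  case 0 thus ?case by simp
next
  case (Suc k)
  have "x^Suc k * sm (of_real a) XX = x * (x^k * sm (of_real a) XX)" by (simp add: mult.assoc)
  also have "\<dots> = (x * sm (of_real (a * inverse p ^ k)) XX) * x^k" unfolding Suc by (simp add: mult.assoc)
  also have "x * sm (of_real (a * inverse p ^ k)) XX = sm (of_real (a * inverse p ^ Suc k)) XX * x"
    unfolding sm_multR sm_multL xX sm_sm by (simp add: algebra_simps)
  finally show ?case by (simp add: mult.assoc)
qed

lemma yk_sm: "st x^k * sm (of_real a) XX = sm (of_real (a * p ^ k)) XX * st x^k"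
proof (induction k)
  case 0 thus ?case by simp
next
  case (Suc k)
  have "st x^Suc k * sm (of_real a) XX = st x * (st x^k * sm (of_real a) XX)" by (simp add: mult.assoc)
  also have "\<dots> = (st x * sm (of_real (a * p ^ k)) XX) * st x^k" unfolding Suc by (simp add: mult.assoc)
  also have "st x * sm (of_real (a * p ^ k)) XX = sm (of_real (a * p ^ Suc k)) XX * st x"
    unfolding sm_multR sm_multL yX sm_sm by (simp add: algebra_simps)
  finally show ?case by (simp add: mult.assoc)
qed

lemma XX1: "XX = sm (of_real 1) XX" by (simp add: sm_one)

lemma PA: "x^m * st x^m = 1 + Qpol sm p m XX"
proof (rule QR[OF p0, where P="\<lambda>m. x^m * st x^m"])
  fix m
  have "x^Suc m * st x^Suc m = x^m * (x * st x) * st x^m" by (simp only: power_Suc2[of x] power_Suc[of "st x"] mult.assoc)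
  also have "\<dots> = x^m * st x^m - (x^m * XX) * st x^m" unfolding XX_def by (simp add: algebra_simps)
  also have "x^m * XX = sm (of_real (inverse p ^ m)) XX * x^m"
    using xk_sm[of m 1] XX1 by simp
  finally show "x^Suc m * st x^Suc m = x^m * st x^m - sm (of_real (inverse p ^ m)) (XX * (x^m * st x^m))"
    by (simp add: sm_multL mult.assoc)
qed simp

lemma PB: "st x^m * x^m = 1 + Qpol sm (inverse p) m (sm (of_real p) XX)"
proof (rule QR[where P="\<lambda>m. st x^m * x^m"])
  show "inverse p > 0" using p0 by simp
  fix m
  have "st x^Suc m * x^Suc m = st x^m * (st x * x) * x^m" by (simp only: power_Suc2[of "st x"] power_Suc[of x] mult.assoc)
  also have "\<dots> = st x^m * x^m - (st x^m * sm (of_real p) XX) * x^m" unfolding yx by (simp add: algebra_simps)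
  also have "st x^m * sm (of_real p) XX = sm (of_real (p * p ^ m)) XX * st x^m"
    using yk_sm[of m p] by simp
  finally show "st x^Suc m * x^Suc m = st x^m * x^m - sm (of_real (inverse (inverse p) ^ m)) (sm (of_real p) XX * (st x^m * x^m))"
    using mult.commute[of "complex_of_real p" "complex_of_real p ^ m"] by (simp add: sm_multL mult.assoc sm_sm)
qed simp


lemma C1: assumes "m \<le> n" shows "x^m * st x^n = (1 + Qpol sm p m XX) * st x^(n-m)"
proof -
  have "st x^n = st x^m * st x^(n-m)" using assms by (simp flip: power_add)
  hence "x^m * st x^n = (x^m * st x^m) * st x^(n-m)" by (simp add: mult.assoc)
  thus ?thesis by (simp add: PA)
qed

lemma C2: assumes "n < m" shows "x^m * st x^n = (1 + Qpol sm p n (sm (of_real (inverse p ^ (m-n))) XX)) * x^(m-n)"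
proof -
  have "x^m = x^(m-n) * x^n" using assms by (simp flip: power_add)
  hence "x^m * st x^n = x^(m-n) * (x^n * st x^n)" by (simp add: mult.assoc)
  also have "\<dots> = x^(m-n) + x^(m-n) * Qpol sm p n XX" by (simp add: PA algebra_simps)
  also have "x^(m-n) * Qpol sm p n XX = Qpol sm p n (sm (of_real (inverse p ^ (m-n))) XX) * x^(m-n)"
    by (rule comm_Q) (metis XX1 xk_sm mult_1)
  finally show ?thesis by (simp add: algebra_simps)
qed

lemma C3: assumes "m \<le> n" shows "st x^m * x^n = (1 + Qpol sm (inverse p) m (sm (of_real p) XX)) * x^(n-m)"
proof -
  have "x^n = x^m * x^(n-m)" using assms by (simp flip: power_add)
  hence "st x^m * x^n = (st x^m * x^m) * x^(n-m)" by (simp add: mult.assoc)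
  thus ?thesis by (simp add: PB)
qed

lemma C4: assumes "n < m" shows "st x^m * x^n = (1 + Qpol sm (inverse p) n (sm (of_real (p * p^(m-n))) XX)) * st x^(m-n)"
proof -
  have "st x^m = st x^(m-n) * st x^n" using assms by (simp flip: power_add)
  hence "st x^m * x^n = st x^(m-n) * (st x^n * x^n)" by (simp add: mult.assoc)
  also have "\<dots> = st x^(m-n) + st x^(m-n) * Qpol sm (inverse p) n (sm (of_real p) XX)" by (simp add: PB algebra_simps)
  also have "st x^(m-n) * Qpol sm (inverse p) n (sm (of_real p) XX) = Qpol sm (inverse p) n (sm (of_real (p * p^(m-n))) XX) * st x^(m-n)"
    by (rule comm_Q) (rule yk_sm)
  finally show ?thesis by (simp add: algebra_simps)
qed

lemma main: "xpow st x \<mu> * xpow st x \<nu> = (1 + calQ2 sm p \<mu> \<nu> (1 - x * st x)) * xpow st x (\<mu> + \<nu>)"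
proof -
  have X: "1 - x * st x = XX" by (simp add: XX_def)
  have p0': "p \<noteq> 0" using p0 by simp
  consider "\<mu> * \<nu> \<ge> 0" | "\<mu> > 0" "\<nu> < 0" | "\<mu> < 0" "\<nu> > 0"
    by (metis linorder_not_le mult_nonneg_nonneg mult_nonpos_nonpos le_less)
  thus ?thesis
  proof cases
    case 1
    hence c: "calQ2 sm p \<mu> \<nu> (1 - x * st x) = 0" by (simp add: calQ2_def)
    have "(\<mu> \<ge> 0 \<and> \<nu> \<ge> 0) \<or> (\<mu> \<le> 0 \<and> \<nu> \<le> 0)" using 1
      by (metis linorder_not_le mult_pos_neg mult_neg_pos less_le_not_le)
    thus ?thesis
    proof
      assume h: "\<mu> \<ge> 0 \<and> \<nu> \<ge> 0"
      thus ?thesis using c by (simp add: xpow_def nat_add_distrib power_add)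
    next
      assume h: "\<mu> \<le> 0 \<and> \<nu> \<le> 0"
      show ?thesis
      proof (cases "\<mu> = 0 \<or> \<nu> = 0")
        case True thus ?thesis using c by (auto simp: xpow_def)
      next
        case False
        hence l: "\<mu> < 0" "\<nu> < 0" using h by auto
        hence "nat (- \<mu> - \<nu>) = nat (- \<mu>) + nat (- \<nu>)" by simp
        thus ?thesis using c l by (simp add: xpow_def power_add)
      qed
    qed
  next
    case 2
    define m where "m = nat \<mu>"
    define n where "n = nat (-\<nu>)"
    have mu: "\<mu> = int m" and nu: "\<nu> = - int n" using 2 by (auto simp: m_def n_def)
    have nn: "\<not> (\<mu> * \<nu> \<ge> 0)" using 2 by (simp add: mult_pos_neg not_le)
    show ?thesis
    proof (cases "m \<le> n")
      case True
      have c: "calQ2 sm p \<mu> \<nu> (1 - x * st x) = Qpol sm p m XX"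
        using 2 True nn unfolding X by (auto simp: calQ2_def calQ_def mu nu)
      have xp: "xpow st x (\<mu> + \<nu>) = st x ^ (n - m)"
        using True unfolding mu nu by (auto simp: xpow_def nat_diff_distrib)
      have "xpow st x \<mu> * xpow st x \<nu> = x^m * st x^n" using 2 unfolding mu nu by (simp add: xpow_def)
      thus ?thesis unfolding c xp using C1[OF True] by simp
    next
      case False
      have pw: "p powi (- (\<mu> + \<nu>)) = inverse p ^ (m - n)"
      proof -
        have "- (\<mu> + \<nu>) = - int (m - n)" using False unfolding mu nu by simp
        thus ?thesis by (simp add: power_int_minus power_inverse)
      qed
      have c: "calQ2 sm p \<mu> \<nu> (1 - x * st x) = Qpol sm p n (sm (of_real (inverse p ^ (m - n))) XX)"
        using 2 False nn unfolding X pw[symmetric] by (auto simp: calQ2_def calQ_def mult_pos_neg mu nu)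
      have xp: "xpow st x (\<mu> + \<nu>) = x ^ (m - n)"
        using False unfolding mu nu by (auto simp: xpow_def nat_diff_distrib)
      have "xpow st x \<mu> * xpow st x \<nu> = x^m * st x^n" using 2 unfolding mu nu by (simp add: xpow_def)
      thus ?thesis unfolding c xp using C2 False by simp
    qed
  next
    case 3
    define m where "m = nat (-\<mu>)"
    define n where "n = nat \<nu>"
    have mu: "\<mu> = - int m" and nu: "\<nu> = int n" using 3 by (auto simp: m_def n_def)
    have nn: "\<not> (\<mu> * \<nu> \<ge> 0)" using 3 by (simp add: mult_neg_pos not_le)
    show ?thesis
    proof (cases "m \<le> n")
      case True
      have c: "calQ2 sm p \<mu> \<nu> (1 - x * st x) = Qpol sm (inverse p) m (sm (of_real p) XX)"
        using 3 True nn unfolding X by (auto simp: calQ2_def calQ_def mu nu)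
      have xp: "xpow st x (\<mu> + \<nu>) = x ^ (n - m)"
        using True unfolding mu nu by (auto simp: xpow_def nat_diff_distrib)
      have "xpow st x \<mu> * xpow st x \<nu> = st x^m * x^n" using 3 unfolding mu nu by (simp add: xpow_def)
      thus ?thesis unfolding c xp using C3[OF True] by simp
    next
      case False
      have pw: "p powi (- (\<mu> + \<nu>)) = p ^ (m - n)"
      proof -
        have "- (\<mu> + \<nu>) = int (m - n)" using False unfolding mu nu by simp
        thus ?thesis by simp
      qed
      have c: "calQ2 sm p \<mu> \<nu> (1 - x * st x) = Qpol sm (inverse p) n (sm (of_real (p * p ^ (m - n))) XX)"
        using 3 False nn unfolding X pw[symmetric] by (auto simp: calQ2_def calQ_def mult_neg_pos mu nu sm_sm)
      have xp: "xpow st x (\<mu> + \<nu>) = st x ^ (m - n)"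
        using False unfolding mu nu by (auto simp: xpow_def nat_diff_distrib)
      have "xpow st x \<mu> * xpow st x \<nu> = st x^m * x^n" using 3 unfolding mu nu by (simp add: xpow_def)
      thus ?thesis unfolding c xp using C4 False by simp
    qed
  qed
qed

end

theorem mainTheorem6:
  fixes sm :: "complex \<Rightarrow> 'a::ring_1 \<Rightarrow> 'a" and st :: "'a \<Rightarrow> 'a"
    and x :: 'a and p :: real
  assumes "cstar_alg sm st"
    and "0 < p" and "p < 1"
    and "st x * x - sm (complex_of_real p) (x * st x) = sm (complex_of_real (1 - p)) 1"
  shows "\<forall>\<mu> \<nu> :: int. xpow st x \<mu> * xpow st x \<nu>
           = (1 + calQ2 sm p \<mu> \<nu> (1 - x * st x)) * xpow st x (\<mu> + \<nu>)"
  using qd.main[OF qd.intro[OF assms]] by blast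
end
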